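(* For a coloured integer $k_x$ and $u,v,n\in\mathbb{N}$, let $d_{k_x}(u,v,n)$ be the number of admissible coloured partitions of size $n$ and weights $u$, $v$ whose largest part $\lambda_1$ satisfies $\lambda_1\le k_x$ in the total order of coloured integers (the empty partition is counted, with $n=u=v=0$), and set $d_{k_x}(u,v,n)=0$ whenever one of $u,v,n$ is negative. Then for all $u,v \in \mathbb{N}$ and all integers $k,n \geq 1$: \begin{align*} d_{(2k+1)_{ab}}(u,v,n)&=d_{(2k)_{b}}(u,v,n)+d_{(2k-1)_{a}}(u-1,v-1,n-2k-1),\\ d_{(2k+1)_{a}}(u,v,n)&=d_{(2k+1)_{ab}}(u,v,n)+d_{(2k)_{ab}}(u-1,v,n-2k-1),\\ d_{(2k+1)_{b^2}}(u,v,n)&=d_{(2k+1)_{a}}(u,v,n)+d_{(2k-1)_{a}}(u,v-2,n-2k-1),\\ d_{(2k+1)_{b}}(u,v,n)&=d_{(2k+1)_{b^2}}(u,v,n)+d_{(2k)_{a}}(u,v-1,n-2k-1),\\ d_{(2k+2)_{ab}}(u,v,n)&= d_{(2k+1)_{b}}(u,v,n)+d_{(2k)_{a}}(u-1,v-1,n-2k-2)+d_{(2k-1)_{a}}(u-1,v-2,n-4k-2),\\ d_{(2k+2)_{a}}(u,v,n)&= d_{(2k+2)_{ab}}(u,v,n)+d_{(2k)_{a}}(u-1,v,n-2k-2)+d_{(2k-1)_{a}}(u-1,v-1,n-4k-2),\\ d_{(2k+3)_{a^2}}(u,v,n)&= d_{(2k+2)_{a}}(u,v,n)+d_{(2k)_{a}}(u-2,v,n-2k-3)+d_{(2k-1)_{a}}(u-2,v-1,n-4k-3),\\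 d_{(2k+2)_{b}}(u,v,n)&=d_{(2k+3)_{a^2}}(u,v,n)+d_{(2k+1)_{a}}(u,v-1,n-2k-2). \end{align*}
   Context: Coloured integers: every positive integer $k$ occurs in the three colours $a$, $b$, $ab$ (written $k_a$, $k_b$, $k_{ab}$). In addition, odd positive integers occur in the colours $a^2$ and $b^2$: $k_{b^2}$ for every odd $k\ge 1$ and $k_{a^2}$ for every odd $k \geq 3$. The integer value of $k_x$ is $k$ and its colour is $x$. These coloured integers are totally ordered by $$1_{ab} < 1_a < 1_{b^2} <1_{b} <2_{ab} < 2_a <3_{a^2} < 2_{b} <3_{ab} < 3_a < 3_{b^2} <3_b <4_{ab}<4_a<5_{a^2}<4_b<5_{ab}<\cdots,$$ that is, for every odd $m\ge1$: $m_{ab}<m_a<m_{b^2}<m_b<(m+1)_{ab}<(m+1)_a<(m+2)_{a^2}<(m+1)_b<(m+2)_{ab}$. Difference conditions: for a coloured integer $\lambda$ (the "upper" part) of colour $x$ and a coloured integer $\mu$ (the "lower" part) of colour $y$, a minimal difference $A(\lambda,\mu)$ is defined as follows, where the row is determined by the colour and the parity of the integer value of $\lambda$, and the entries are listed for $y = a, b, ab, a^2, b^2$ in this order: - $\lambda$ of colour $a$, odd: $2,2,1,2,2$; - $\lambda$ of colour $b^2$: $2,3,2,2,4$; - $\lambda$ of colour $b$, odd: $1,2,1,2,2$; - $\lambda$ of colour $ab$, even: $2,2,2,3,3$; - $\lambda$ of colour $a$, even: $2,2,2,3,3$; - $\lambda$ of colour $a^2$: $3,3,3,4,4$; - $\lambda$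 of colour $b$, even: $1,2,1,1,3$; - $\lambda$ of colour $ab$, odd: $2,3,2,2,3$. An admissible coloured partition is a finite (possibly empty) sequence $\lambda_1,\dots,\lambda_s$ of coloured integers, none of which equals $1_{ab}$ or $1_{b^2}$, such that for every $1\le i<s$ the integer values satisfy $\lambda_i-\lambda_{i+1}\ge A(\lambda_i,\lambda_{i+1})$. Its size $n$ is the sum of the integer values of its parts. Its weight $u$ is the number of parts of colour $a$ or $ab$ plus twice the number of parts of colour $a^2$; its weight $v$ is the number of parts of colour $b$ or $ab$ plus twice the number of parts of colour $b^2$. *)

theory Defs
  imports Main
begin

datatype colour = Ca | Cb | Cab | Ca2 | Cb2

type_synonym cint = "nat \<times> colour"

definition valid_cint :: "cint \<Rightarrow> bool" where
  "valid_cint p \<longleftrightarrow> (let k = fst p; c = snd p in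
     k \<ge> 1 \<and> (c = Ca2 \<longrightarrow> odd k \<and> k \<ge> 3) \<and> (c = Cb2 \<longrightarrow> odd k))"

text \<open>Position of a coloured integer in the total order
  1_ab < 1_a < 1_b2 < 1_b < 2_ab < 2_a < 3_a2 < 2_b < 3_ab < ...
  (blocks of eight: for odd m, m_ab, m_a, m_b2, m_b, (m+1)_ab, (m+1)_a, (m+2)_a2, (m+1)_b).\<close>
fun crank :: "cint \<Rightarrow> nat" where
  "crank (k, Cab) = (if odd k then 8 * ((k - 1) div 2) else 8 * ((k - 2) div 2) + 4)"
| "crank (k, Ca) = (if odd k then 8 * ((k - 1) div 2) + 1 else 8 * ((k - 2) div 2) + 5)"
| "crank (k, Cb2) = 8 * ((k - 1) div 2) + 2"
| "crank (k, Cb) = (if odd k then 8 * ((k - 1) div 2) + 3 else 8 * ((k - 2) div 2) + 7)"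
| "crank (k, Ca2) = 8 * ((k - 3) div 2) + 6"

definition cle :: "cint \<Rightarrow> cint \<Rightarrow> bool" where
  "cle p q \<longleftrightarrow> crank p \<le> crank q"

text \<open>Entries of a row, for lower colour y = a, b, ab, a2, b2 in this order.\<close>
fun row :: "nat \<Rightarrow> nat \<Rightarrow> nat \<Rightarrow> nat \<Rightarrow> nat \<Rightarrow> colour \<Rightarrow> nat" where
  "row xa xb xab xa2 xb2 Ca = xa"
| "row xa xb xab xa2 xb2 Cb = xb"
| "row xa xb xab xa2 xb2 Cab = xab"
| "row xa xb xab xa2 xb2 Ca2 = xa2"
| "row xa xb xab xa2 xb2 Cb2 = xb2"

definition mindiff :: "cint \<Rightarrow> cint \<Rightarrow> nat" where
  "mindiff lam mu = (let k = fst lam; x = snd lam; y = snd mu in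
     (case x of
        Ca \<Rightarrow> if odd k then row 2 2 1 2 2 y else row 2 2 2 3 3 y
      | Cb2 \<Rightarrow> row 2 3 2 2 4 y
      | Cb \<Rightarrow> if odd k then row 1 2 1 2 2 y else row 1 2 1 1 3 y
      | Cab \<Rightarrow> if odd k then row 2 3 2 2 3 y else row 2 2 2 3 3 y
      | Ca2 \<Rightarrow> row 3 3 3 4 4 y))"

definition admissible :: "cint list \<Rightarrow> bool" where
  "admissible ps \<longleftrightarrow>
     (\<forall>p\<in>set ps. valid_cint p \<and> p \<noteq> (1, Cab) \<and> p \<noteq> (1, Cb2)) \<and>
     (\<forall>i. Suc i < length ps \<longrightarrow>
        int (fst (ps ! i)) - int (fst (ps ! Suc i)) \<ge> int (mindiff (ps ! i) (ps ! Suc i)))"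

definition psize :: "cint list \<Rightarrow> nat" where
  "psize ps = (\<Sum>p\<leftarrow>ps. fst p)"

definition weight_u :: "cint list \<Rightarrow> nat" where
  "weight_u ps = length (filter (\<lambda>p. snd p = Ca \<or> snd p = Cab) ps)
                 + 2 * length (filter (\<lambda>p. snd p = Ca2) ps)"

definition weight_v :: "cint list \<Rightarrow> nat" where
  "weight_v ps = length (filter (\<lambda>p. snd p = Cb \<or> snd p = Cab) ps)
                 + 2 * length (filter (\<lambda>p. snd p = Cb2) ps)"

text \<open>d_{k_x}(u,v,n); zero if any argument is negative. The largest part is the head.\<close>
definition dcount :: "cint \<Rightarrow> int \<Rightarrow> int \<Rightarrow> int \<Rightarrow> nat" where
  "dcount kx u v n = (if u < 0 \<or> v < 0 \<or> n < 0 then 0 else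
     card {ps. admissible ps \<and> int (psize ps) = n \<and> int (weight_u ps) = u
              \<and> int (weight_v ps) = v \<and> (ps = [] \<or> cle (hd ps) kx)})"

end

theory Submission
  imports Defs
begin


definition good :: "cint \<Rightarrow> bool" where
  "good p \<longleftrightarrow> valid_cint p \<and> p \<noteq> (1, Cab) \<and> p \<noteq> (1, Cb2)"
definition compat :: "cint \<Rightarrow> cint \<Rightarrow> bool" where
  "compat K m \<longleftrightarrow> int (fst m) + int (mindiff K m) \<le> int (fst K)"
definition Q :: "nat \<Rightarrow> nat \<Rightarrow> nat \<Rightarrow> cint list set" where
  "Q u v n = {ps. admissible ps \<and> psize ps = n \<and> weight_u ps = u \<and> weight_v ps = v}"
definition D :: "cint \<Rightarrow> nat \<Rightarrow> nat \<Rightarrow> nat \<Rightarrow> cint list set" where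
  "D K u v n = {ps \<in> Q u v n. ps = [] \<or> cle (hd ps) K}"
definition E :: "cint \<Rightarrow> nat \<Rightarrow> nat \<Rightarrow> nat \<Rightarrow> cint list set" where
  "E K u v n = {ps \<in> Q u v n. ps \<noteq> [] \<and> hd ps = K}"
definition T :: "cint \<Rightarrow> nat \<Rightarrow> nat \<Rightarrow> nat \<Rightarrow> cint list set" where
  "T K u v n = {ps \<in> Q u v n. ps = [] \<or> compat K (hd ps)}"

lemma admissible_Cons:
  "admissible (p # qs) \<longleftrightarrow> good p \<and> admissible qs \<and> (qs = [] \<or> compat p (hd qs))"
proof
  assume a: "admissible (p # qs)"
  have 1: "good p" "\<forall>q\<in>set qs. good q" using a unfolding admissible_def good_def by auto
  have 2: "\<forall>i. Suc i < length qs \<longrightarrow>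
        int (fst (qs ! i)) - int (fst (qs ! Suc i)) \<ge> int (mindiff (qs ! i) (qs ! Suc i))"
  proof (intro allI impI)
    fix i assume "Suc i < length qs"
    then show "int (fst (qs ! i)) - int (fst (qs ! Suc i)) \<ge> int (mindiff (qs ! i) (qs ! Suc i))"
      using a unfolding admissible_def by (auto dest!: spec[of _ "Suc i"])
  qed
  have 3: "qs = [] \<or> compat p (hd qs)"
  proof (cases qs)
    case (Cons q r)
    then show ?thesis using a unfolding admissible_def compat_def by (auto dest!: spec[of _ 0])
  qed simp
  show "good p \<and> admissible qs \<and> (qs = [] \<or> compat p (hd qs))"
    using 1 2 3 unfolding admissible_def good_def by auto
next
  assume a: "good p \<and> admissible qs \<and> (qs = [] \<or> compat p (hd qs))"
  show "admissible (p # qs)"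
    unfolding admissible_def
  proof (intro conjI allI impI)
    show "\<forall>q\<in>set (p#qs). valid_cint q \<and> q \<noteq> (1, Cab) \<and> q \<noteq> (1, Cb2)"
      using a unfolding admissible_def good_def by auto
  next
    fix i assume i: "Suc i < length (p # qs)"
    show "int (fst ((p#qs) ! i)) - int (fst ((p#qs) ! Suc i)) \<ge> int (mindiff ((p#qs) ! i) ((p#qs) ! Suc i))"
    proof (cases i)
      case 0
      then obtain q r where "qs = q # r" using i by (cases qs) auto
      then show ?thesis using a 0 unfolding compat_def by auto
    next
      case (Suc j)
      then show ?thesis using a i unfolding admissible_def by auto
    qed
  qed
qed

lemma psize_Cons: "psize (p # qs) = fst p + psize qs" by (simp add: psize_def)
lemma wu_Cons: "weight_u (p # qs) = weight_u [p] + weight_u qs" by (simp add: weight_u_def)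
lemma wv_Cons: "weight_v (p # qs) = weight_v [p] + weight_v qs" by (simp add: weight_v_def)

lemma finite_colour: "finite (UNIV :: colour set)"
proof -
  have "(UNIV :: colour set) = {Ca, Cb, Cab, Ca2, Cb2}" by (auto intro: colour.exhaust)
  then show ?thesis by (metis finite.emptyI finite_insert)
qed

lemma len_le: "(\<forall>p\<in>set ps. fst p \<ge> 1) \<Longrightarrow> length ps \<le> psize ps"
  by (induction ps) (auto simp: psize_def)

lemma mem_le: "p \<in> set ps \<Longrightarrow> fst p \<le> psize ps"
  by (induction ps) (auto simp: psize_Cons)

lemma finite_Q: "finite (Q u v n)"
proof -
  have "Q u v n \<subseteq> {xs. set xs \<subseteq> {0..n} \<times> UNIV \<and> length xs \<le> n}"
  proof
    fix ps assume "ps \<in> Q u v n"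
    then have a: "admissible ps" "psize ps = n" unfolding Q_def by auto
    then have "\<forall>p\<in>set ps. fst p \<ge> 1" unfolding admissible_def valid_cint_def Let_def by auto
    then have "length ps \<le> n" using len_le a by auto
    moreover have "set ps \<subseteq> {0..n} \<times> UNIV" using mem_le a by force
    ultimately show "ps \<in> {xs. set xs \<subseteq> {0..n} \<times> UNIV \<and> length xs \<le> n}" by auto
  qed
  moreover have "finite {xs. set xs \<subseteq> {0..n} \<times> (UNIV::colour set) \<and> length xs \<le> n}"
    by (rule finite_lists_length_le) (simp add: finite_colour)
  ultimately show ?thesis by (rule finite_subset)
qed

lemma good_hd: "ps \<in> Q u v n \<Longrightarrow> ps \<noteq> [] \<Longrightarrow> good (hd ps)"
  unfolding Q_def by (cases ps) (auto simp: admissible_Cons)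

lemma int_eq_nat: "N \<ge> 0 \<Longrightarrow> (int x = N) = (x = nat N)"
  by auto

lemma dcount_D:
  assumes "U \<ge> 0" "V \<ge> 0" "N \<ge> 0"
  shows "dcount K U V N = card (D K (nat U) (nat V) (nat N))"
proof -
  have "{ps. admissible ps \<and> int (psize ps) = N \<and> int (weight_u ps) = U
              \<and> int (weight_v ps) = V \<and> (ps = [] \<or> cle (hd ps) K)} = D K (nat U) (nat V) (nat N)"
    unfolding D_def Q_def by (simp only: int_eq_nat assms) blast
  then show ?thesis unfolding dcount_def using assms by simp
qed

lemma dcount_neg: "U < 0 \<or> V < 0 \<or> N < 0 \<Longrightarrow> dcount K U V N = 0"
  unfolding dcount_def by simp

lemma E_card:
  assumes "good K"
  shows "card (E K u v n) = (if weight_u [K] \<le> u \<and> weight_v [K] \<le> v \<and> fst K \<le> n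
     then card (T K (u - weight_u [K]) (v - weight_v [K]) (n - fst K)) else 0)"
proof (cases "weight_u [K] \<le> u \<and> weight_v [K] \<le> v \<and> fst K \<le> n")
  case True
  have mem: "K # qs \<in> Q u v n \<longleftrightarrow> qs \<in> Q (u - weight_u [K]) (v - weight_v [K]) (n - fst K) \<and> (qs = [] \<or> compat K (hd qs))"
    for qs
  proof -
    have eq: "K # qs \<in> Q u v n \<longleftrightarrow> (good K \<and> admissible qs \<and> (qs = [] \<or> compat K (hd qs))) \<and> fst K + psize qs = n \<and>
       weight_u [K] + weight_u qs = u \<and> weight_v [K] + weight_v qs = v"
      unfolding Q_def by (simp only: mem_Collect_eq admissible_Cons psize_Cons wu_Cons[of K qs] wv_Cons[of K qs])
    have a: "fst K + psize qs = n \<longleftrightarrow> psize qs = n - fst K"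
      "weight_u [K] + weight_u qs = u \<longleftrightarrow> weight_u qs = u - weight_u [K]"
      "weight_v [K] + weight_v qs = v \<longleftrightarrow> weight_v qs = v - weight_v [K]"
      using True by arith+
    show ?thesis unfolding eq unfolding a Q_def mem_Collect_eq using assms by blast
  qed
  have "E K u v n = (Cons K) ` (T K (u - weight_u [K]) (v - weight_v [K]) (n - fst K))"
  proof
    show "E K u v n \<subseteq> (Cons K) ` (T K (u - weight_u [K]) (v - weight_v [K]) (n - fst K))"
    proof
      fix ps assume ps: "ps \<in> E K u v n"
      then obtain qs where qs: "ps = K # qs" unfolding E_def by (cases ps) auto
      then have "qs \<in> T K (u - weight_u [K]) (v - weight_v [K]) (n - fst K)"
        using ps mem[of qs] unfolding E_def T_def by auto
      then show "ps \<in> (Cons K) ` (T K (u - weight_u [K]) (v - weight_v [K]) (n - fst K))"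
        using qs by blast
    qed
  next
    show "(Cons K) ` (T K (u - weight_u [K]) (v - weight_v [K]) (n - fst K)) \<subseteq> E K u v n"
    proof
      fix ps assume "ps \<in> (Cons K) ` (T K (u - weight_u [K]) (v - weight_v [K]) (n - fst K))"
      then obtain qs where qs: "ps = K # qs" "qs \<in> T K (u - weight_u [K]) (v - weight_v [K]) (n - fst K)"
        by blast
      then show "ps \<in> E K u v n" using mem[of qs] unfolding E_def T_def by auto
    qed
  qed
  then show ?thesis using True by (simp add: card_image)
next
  case False
  have "E K u v n = {}"
  proof (rule ccontr)
    assume "E K u v n \<noteq> {}"
    then obtain qs where "K # qs \<in> Q u v n" unfolding E_def by (auto simp: neq_Nil_conv)
    then have "fst K + psize qs = n" "weight_u [K] + weight_u qs = u" "weight_v [K] + weight_v qs = v"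
      unfolding Q_def by (simp_all only: mem_Collect_eq psize_Cons wu_Cons[of K qs] wv_Cons[of K qs])
    then show False using False by linarith
  qed
  then show ?thesis unfolding if_not_P[OF False] by simp
qed

lemma D_split:
  assumes "crank K' < crank K"
    and "\<forall>c. good c \<longrightarrow> crank c \<le> crank K \<longrightarrow> crank c \<le> crank K' \<or> c = K"
  shows "card (D K u v n) = card (D K' u v n) + card (E K u v n)"
proof -
  have h: "cle (hd ps) K \<longleftrightarrow> cle (hd ps) K' \<or> hd ps = K" if "ps \<in> Q u v n" "ps \<noteq> []" for ps
  proof -
    have g: "good (hd ps)" using good_hd that by blast
    show ?thesis using assms(2)[rule_format, OF g] assms(1) unfolding cle_def by auto
  qed
  have "D K u v n = D K' u v n \<union> E K u v n"
    unfolding D_def E_def using h by blast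
  moreover have "D K' u v n \<inter> E K u v n = {}"
    using assms(1) unfolding D_def E_def cle_def by auto
  moreover have "finite (D K' u v n)" "finite (E K u v n)"
    using finite_Q unfolding D_def E_def by auto
  ultimately show ?thesis by (simp add: card_Un_disjoint)
qed

lemma T_D:
  assumes "\<forall>m. good m \<longrightarrow> (compat K m \<longleftrightarrow> cle m K2)"
  shows "T K u v n = D K2 u v n"
proof -
  have "\<And>x. x \<in> Q u v n \<Longrightarrow> x \<noteq> [] \<Longrightarrow> (compat K (hd x) \<longleftrightarrow> cle (hd x) K2)"
    using assms good_hd by blast
  then show ?thesis unfolding T_def D_def by blast
qed

lemma T_DE:
  assumes "\<forall>m. good m \<longrightarrow> (compat K m \<longleftrightarrow> cle m K2 \<or> m = K3)" and "\<not> cle K3 K2"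
  shows "card (T K u v n) = card (D K2 u v n) + card (E K3 u v n)"
proof -
  have "\<And>x. x \<in> Q u v n \<Longrightarrow> x \<noteq> [] \<Longrightarrow> (compat K (hd x) \<longleftrightarrow> cle (hd x) K2 \<or> hd x = K3)"
    using assms good_hd by blast
  then have "T K u v n = D K2 u v n \<union> E K3 u v n"
    unfolding T_def D_def E_def by blast
  moreover have "D K2 u v n \<inter> E K3 u v n = {}"
    using assms(2) unfolding D_def E_def by auto
  moreover have "finite (D K2 u v n)" "finite (E K3 u v n)"
    using finite_Q unfolding D_def E_def by auto
  ultimately show ?thesis by (simp add: card_Un_disjoint)
qed



lemma two_term:
  assumes "good K" "crank K' < crank K"
    "\<forall>c. good c \<longrightarrow> crank c \<le> crank K \<longrightarrow> crank c \<le> crank K' \<or> c = K"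
    "\<forall>m. good m \<longrightarrow> (compat K m \<longleftrightarrow> cle m K2)"
  shows "card (D K u v n) = card (D K' u v n) + (if weight_u [K] \<le> u \<and> weight_v [K] \<le> v \<and> fst K \<le> n
     then card (D K2 (u - weight_u [K]) (v - weight_v [K]) (n - fst K)) else 0)"
  using D_split[OF assms(2,3)] E_card[OF assms(1)] T_D[OF assms(4)] by simp

lemma three_term:
  assumes "good K" "crank K' < crank K"
    "\<forall>c. good c \<longrightarrow> crank c \<le> crank K \<longrightarrow> crank c \<le> crank K' \<or> c = K"
    "\<forall>m. good m \<longrightarrow> (compat K m \<longleftrightarrow> cle m K2 \<or> m = K3)" "\<not> cle K3 K2" "good K3"
    "\<forall>m. good m \<longrightarrow> (compat K3 m \<longleftrightarrow> cle m K4)"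
  shows "card (D K u v n) = card (D K' u v n) + (if weight_u [K] \<le> u \<and> weight_v [K] \<le> v \<and> fst K \<le> n
     then card (D K2 (u - weight_u [K]) (v - weight_v [K]) (n - fst K)) +
       (if weight_u [K3] \<le> u - weight_u [K] \<and> weight_v [K3] \<le> v - weight_v [K] \<and> fst K3 \<le> n - fst K
        then card (D K4 (u - weight_u [K] - weight_u [K3]) (v - weight_v [K] - weight_v [K3]) (n - fst K - fst K3)) else 0)
     else 0)"
  using D_split[OF assms(2,3)] E_card[OF assms(1)] T_DE[OF assms(4,5)] E_card[OF assms(6)] T_D[OF assms(7)] by simp

lemma compat_nat: "compat K m \<longleftrightarrow> fst m + mindiff K m \<le> fst K"
  unfolding compat_def by linarith

lemma j_form: "(1::nat) \<le> j \<Longrightarrow> (\<exists>t. j = 2*t+1) \<or> (\<exists>t. j = 2*t+2)"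
  by presburger
lemma l1: "odd (j::nat) \<Longrightarrow> 3 \<le> j \<Longrightarrow> \<exists>t. j = 2*t+3" by presburger
lemma l2: "odd (j::nat) \<Longrightarrow> \<exists>t. j = 2*t+1" by presburger

lemma good_form: "good (j,c) \<Longrightarrow> (\<exists>t. j = 2*t+1 \<and> c \<noteq> Ca2) \<or> (\<exists>t. j = 2*t+3 \<and> c = Ca2) \<or> (\<exists>t. j = 2*t+2 \<and> c \<noteq> Ca2 \<and> c \<noteq> Cb2)"
proof -
  assume g: "good (j,c)"
  then have j: "1 \<le> j" unfolding good_def valid_cint_def by simp
  show ?thesis
  proof (cases c)
    case Ca2
    then show ?thesis using g l1 unfolding good_def valid_cint_def by auto
  next
    case Cb2
    then show ?thesis using g l2 unfolding good_def valid_cint_def by auto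
  qed (use j_form[OF j] in auto)
qed

lemma cmb: "good (j,c) \<Longrightarrow> (compat (2*s+2,Cb) (j,c) \<longleftrightarrow> cle (j,c) (2*s+1,Ca))"
  apply (frule good_form)
  apply (elim disjE exE conjE)
  apply (case_tac [!] c)
  apply (simp_all add: good_def valid_cint_def compat_nat mindiff_def cle_def)
  apply presburger+
  done

lemma pr1: "good (j,c) \<Longrightarrow> crank (j,c) \<le> crank (2*s+3,Cab) \<Longrightarrow> crank (j,c) \<le> crank (2*s+2,Cb) \<or> (j,c) = (2*s+3,Cab)"
  apply (frule good_form)
  apply (elim disjE exE conjE)
  apply (case_tac [!] c)
  apply (simp_all add: good_def valid_cint_def)
  apply presburger+
  done

lemma cm1: "good (j,c) \<Longrightarrow> (compat (2*s+3,Cab) (j,c) \<longleftrightarrow> cle (j,c) (2*s+1,Ca))"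
  apply (frule good_form)
  apply (elim disjE exE conjE)
  apply (case_tac [!] c)
  apply (simp_all add: good_def valid_cint_def compat_nat mindiff_def cle_def)
  apply presburger+
  done

lemma pr2: "good (j,c) \<Longrightarrow> crank (j,c) \<le> crank (2*s+3,Ca) \<Longrightarrow> crank (j,c) \<le> crank (2*s+3,Cab) \<or> (j,c) = (2*s+3,Ca)"
  apply (frule good_form)
  apply (elim disjE exE conjE)
  apply (case_tac [!] c)
  apply (simp_all add: good_def valid_cint_def)
  apply presburger+
  done

lemma cm2: "good (j,c) \<Longrightarrow> (compat (2*s+3,Ca) (j,c) \<longleftrightarrow> cle (j,c) (2*s+2,Cab))"
  apply (frule good_form)
  apply (elim disjE exE conjE)
  apply (case_tac [!] c)
  apply (simp_all add: good_def valid_cint_def compat_nat mindiff_def cle_def)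
  apply presburger+
  done

lemma pr3: "good (j,c) \<Longrightarrow> crank (j,c) \<le> crank (2*s+3,Cb2) \<Longrightarrow> crank (j,c) \<le> crank (2*s+3,Ca) \<or> (j,c) = (2*s+3,Cb2)"
  apply (frule good_form)
  apply (elim disjE exE conjE)
  apply (case_tac [!] c)
  apply (simp_all add: good_def valid_cint_def)
  apply presburger+
  done

lemma cm3: "good (j,c) \<Longrightarrow> (compat (2*s+3,Cb2) (j,c) \<longleftrightarrow> cle (j,c) (2*s+1,Ca))"
  apply (frule good_form)
  apply (elim disjE exE conjE)
  apply (case_tac [!] c)
  apply (simp_all add: good_def valid_cint_def compat_nat mindiff_def cle_def)
  apply presburger+
  done

lemma pr4: "good (j,c) \<Longrightarrow> crank (j,c) \<le> crank (2*s+3,Cb) \<Longrightarrow> crank (j,c) \<le> crank (2*s+3,Cb2) \<or> (j,c) = (2*s+3,Cb)"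
  apply (frule good_form)
  apply (elim disjE exE conjE)
  apply (case_tac [!] c)
  apply (simp_all add: good_def valid_cint_def)
  apply presburger+
  done

lemma cm4: "good (j,c) \<Longrightarrow> (compat (2*s+3,Cb) (j,c) \<longleftrightarrow> cle (j,c) (2*s+2,Ca))"
  apply (frule good_form)
  apply (elim disjE exE conjE)
  apply (case_tac [!] c)
  apply (simp_all add: good_def valid_cint_def compat_nat mindiff_def cle_def)
  apply presburger+
  done

lemma pr5: "good (j,c) \<Longrightarrow> crank (j,c) \<le> crank (2*s+4,Cab) \<Longrightarrow> crank (j,c) \<le> crank (2*s+3,Cb) \<or> (j,c) = (2*s+4,Cab)"
  apply (frule good_form)
  apply (elim disjE exE conjE)
  apply (case_tac [!] c)
  apply (simp_all add: good_def valid_cint_def)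
  apply presburger+
  done

lemma cm5: "good (j,c) \<Longrightarrow> (compat (2*s+4,Cab) (j,c) \<longleftrightarrow> cle (j,c) (2*s+2,Ca) \<or> (j,c) = (2*s+2,Cb))"
  apply (frule good_form)
  apply (elim disjE exE conjE)
  apply (case_tac [!] c)
  apply (simp_all add: good_def valid_cint_def compat_nat mindiff_def cle_def)
  apply presburger+
  done

lemma pr6: "good (j,c) \<Longrightarrow> crank (j,c) \<le> crank (2*s+4,Ca) \<Longrightarrow> crank (j,c) \<le> crank (2*s+4,Cab) \<or> (j,c) = (2*s+4,Ca)"
  apply (frule good_form)
  apply (elim disjE exE conjE)
  apply (case_tac [!] c)
  apply (simp_all add: good_def valid_cint_def)
  apply presburger+
  done

lemma cm6: "good (j,c) \<Longrightarrow> (compat (2*s+4,Ca) (j,c) \<longleftrightarrow> cle (j,c) (2*s+2,Ca) \<or> (j,c) = (2*s+2,Cb))"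
  apply (frule good_form)
  apply (elim disjE exE conjE)
  apply (case_tac [!] c)
  apply (simp_all add: good_def valid_cint_def compat_nat mindiff_def cle_def)
  apply presburger+
  done

lemma pr7: "good (j,c) \<Longrightarrow> crank (j,c) \<le> crank (2*s+5,Ca2) \<Longrightarrow> crank (j,c) \<le> crank (2*s+4,Ca) \<or> (j,c) = (2*s+5,Ca2)"
  apply (frule good_form)
  apply (elim disjE exE conjE)
  apply (case_tac [!] c)
  apply (simp_all add: good_def valid_cint_def)
  apply presburger+
  done

lemma cm7: "good (j,c) \<Longrightarrow> (compat (2*s+5,Ca2) (j,c) \<longleftrightarrow> cle (j,c) (2*s+2,Ca) \<or> (j,c) = (2*s+2,Cb))"
  apply (frule good_form)
  apply (elim disjE exE conjE)
  apply (case_tac [!] c)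
  apply (simp_all add: good_def valid_cint_def compat_nat mindiff_def cle_def)
  apply presburger+
  done

lemma pr8: "good (j,c) \<Longrightarrow> crank (j,c) \<le> crank (2*s+4,Cb) \<Longrightarrow> crank (j,c) \<le> crank (2*s+5,Ca2) \<or> (j,c) = (2*s+4,Cb)"
  apply (frule good_form)
  apply (elim disjE exE conjE)
  apply (case_tac [!] c)
  apply (simp_all add: good_def valid_cint_def)
  apply presburger+
  done

lemma cm8: "good (j,c) \<Longrightarrow> (compat (2*s+4,Cb) (j,c) \<longleftrightarrow> cle (j,c) (2*s+3,Ca))"
  apply (frule good_form)
  apply (elim disjE exE conjE)
  apply (case_tac [!] c)
  apply (simp_all add: good_def valid_cint_def compat_nat mindiff_def cle_def)
  apply presburger+
  done



lemma allpair: "(\<And>j c. P (j,c)) \<Longrightarrow> \<forall>x. P x" by (metis prod.exhaust)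

lemma dbase: "dcount K (int u) (int v) (int n) = card (D K u v n)"
  using dcount_D[of "int u" "int v" "int n" K] by simp

lemma dshift0: "int u - int 0 = int u" by simp

lemma dshift: "dcount K (int u - int a) (int v - int b) (int n - int m) =
  (if a \<le> u \<and> b \<le> v \<and> m \<le> n then card (D K (u-a) (v-b) (n-m)) else 0)"
proof (cases "a \<le> u \<and> b \<le> v \<and> m \<le> n")
  case True
  then have "int u - int a = int (u-a)" "int v - int b = int (v-b)" "int n - int m = int (n-m)" by auto
  then show ?thesis unfolding if_P[OF True] by (simp only: dbase)
next
  case False
  then have "int u - int a < 0 \<or> int v - int b < 0 \<or> int n - int m < 0" by auto
  then show ?thesis unfolding if_not_P[OF False] by (rule dcount_neg)
qed

lemma W: "weight_u [(x,Cab)] = 1" "weight_v [(x,Cab)] = 1" "weight_u [(x,Ca)] = 1" "weight_v [(x,Ca)] = 0"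
  "weight_u [(x,Cb)] = 0" "weight_v [(x,Cb)] = 1" "weight_u [(x,Ca2)] = 2" "weight_v [(x,Ca2)] = 0"
  "weight_u [(x,Cb2)] = 0" "weight_v [(x,Cb2)] = 2"
  by (simp_all add: weight_u_def weight_v_def)

lemma dshiftA: "dcount K (int u) (int v - int b) (int n - int m) =
  (if b \<le> v \<and> m \<le> n then card (D K u (v-b) (n-m)) else 0)"
  using dshift[of K u 0 v b n m] by simp

lemma dshiftB: "dcount K (int u - int a) (int v) (int n - int m) =
  (if a \<le> u \<and> m \<le> n then card (D K (u-a) v (n-m)) else 0)"
  using dshift[of K u a v 0 n m] by simp

lemma I1: "card (D (2*s+3,Cab) u v n) = card (D (2*s+2,Cb) u v n) + (if weight_u [(2*s+3,Cab)] \<le> u \<and> weight_v [(2*s+3,Cab)] \<le> v \<and> fst (2*s+3,Cab) \<le> n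
     then card (D (2*s+1,Ca) (u - weight_u [(2*s+3,Cab)]) (v - weight_v [(2*s+3,Cab)]) (n - fst (2*s+3,Cab))) else 0)"
proof (rule two_term)
  show "\<forall>c. good c \<longrightarrow> crank c \<le> crank (2*s+3,Cab) \<longrightarrow> crank c \<le> crank (2*s+2,Cb) \<or> c = (2*s+3,Cab)"
    by (rule allpair, intro impI, erule pr1, assumption)
  show "\<forall>m. good m \<longrightarrow> (compat (2*s+3,Cab) m \<longleftrightarrow> cle m (2*s+1,Ca))"
    by (rule allpair) (blast dest: cm1)
qed (simp_all add: good_def valid_cint_def)

lemma I2: "card (D (2*s+3,Ca) u v n) = card (D (2*s+3,Cab) u v n) + (if weight_u [(2*s+3,Ca)] \<le> u \<and> weight_v [(2*s+3,Ca)] \<le> v \<and> fst (2*s+3,Ca) \<le> n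
     then card (D (2*s+2,Cab) (u - weight_u [(2*s+3,Ca)]) (v - weight_v [(2*s+3,Ca)]) (n - fst (2*s+3,Ca))) else 0)"
proof (rule two_term)
  show "\<forall>c. good c \<longrightarrow> crank c \<le> crank (2*s+3,Ca) \<longrightarrow> crank c \<le> crank (2*s+3,Cab) \<or> c = (2*s+3,Ca)"
    by (rule allpair, intro impI, erule pr2, assumption)
  show "\<forall>m. good m \<longrightarrow> (compat (2*s+3,Ca) m \<longleftrightarrow> cle m (2*s+2,Cab))"
    by (rule allpair) (blast dest: cm2)
qed (simp_all add: good_def valid_cint_def)

lemma I3: "card (D (2*s+3,Cb2) u v n) = card (D (2*s+3,Ca) u v n) + (if weight_u [(2*s+3,Cb2)] \<le> u \<and> weight_v [(2*s+3,Cb2)] \<le> v \<and> fst (2*s+3,Cb2) \<le> n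
     then card (D (2*s+1,Ca) (u - weight_u [(2*s+3,Cb2)]) (v - weight_v [(2*s+3,Cb2)]) (n - fst (2*s+3,Cb2))) else 0)"
proof (rule two_term)
  show "\<forall>c. good c \<longrightarrow> crank c \<le> crank (2*s+3,Cb2) \<longrightarrow> crank c \<le> crank (2*s+3,Ca) \<or> c = (2*s+3,Cb2)"
    by (rule allpair, intro impI, erule pr3, assumption)
  show "\<forall>m. good m \<longrightarrow> (compat (2*s+3,Cb2) m \<longleftrightarrow> cle m (2*s+1,Ca))"
    by (rule allpair) (blast dest: cm3)
qed (simp_all add: good_def valid_cint_def)

lemma I4: "card (D (2*s+3,Cb) u v n) = card (D (2*s+3,Cb2) u v n) + (if weight_u [(2*s+3,Cb)] \<le> u \<and> weight_v [(2*s+3,Cb)] \<le> v \<and> fst (2*s+3,Cb) \<le> n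
     then card (D (2*s+2,Ca) (u - weight_u [(2*s+3,Cb)]) (v - weight_v [(2*s+3,Cb)]) (n - fst (2*s+3,Cb))) else 0)"
proof (rule two_term)
  show "\<forall>c. good c \<longrightarrow> crank c \<le> crank (2*s+3,Cb) \<longrightarrow> crank c \<le> crank (2*s+3,Cb2) \<or> c = (2*s+3,Cb)"
    by (rule allpair, intro impI, erule pr4, assumption)
  show "\<forall>m. good m \<longrightarrow> (compat (2*s+3,Cb) m \<longleftrightarrow> cle m (2*s+2,Ca))"
    by (rule allpair) (blast dest: cm4)
qed (simp_all add: good_def valid_cint_def)

lemma I5: "card (D (2*s+4,Cab) u v n) = card (D (2*s+3,Cb) u v n) + (if weight_u [(2*s+4,Cab)] \<le> u \<and> weight_v [(2*s+4,Cab)] \<le> v \<and> fst (2*s+4,Cab) \<le> n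
     then card (D (2*s+2,Ca) (u - weight_u [(2*s+4,Cab)]) (v - weight_v [(2*s+4,Cab)]) (n - fst (2*s+4,Cab))) +
       (if weight_u [(2*s+2,Cb)] \<le> u - weight_u [(2*s+4,Cab)] \<and> weight_v [(2*s+2,Cb)] \<le> v - weight_v [(2*s+4,Cab)] \<and> fst (2*s+2,Cb) \<le> n - fst (2*s+4,Cab)
        then card (D (2*s+1,Ca) (u - weight_u [(2*s+4,Cab)] - weight_u [(2*s+2,Cb)]) (v - weight_v [(2*s+4,Cab)] - weight_v [(2*s+2,Cb)]) (n - fst (2*s+4,Cab) - fst (2*s+2,Cb))) else 0)
     else 0)"
proof (rule three_term)
  show "\<forall>c. good c \<longrightarrow> crank c \<le> crank (2*s+4,Cab) \<longrightarrow> crank c \<le> crank (2*s+3,Cb) \<or> c = (2*s+4,Cab)"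
    by (rule allpair, intro impI, erule pr5, assumption)
  show "\<forall>m. good m \<longrightarrow> (compat (2*s+4,Cab) m \<longleftrightarrow> cle m (2*s+2,Ca) \<or> m = (2*s+2,Cb))"
    by (rule allpair) (blast dest: cm5)
  show "\<forall>m. good m \<longrightarrow> (compat (2*s+2,Cb) m \<longleftrightarrow> cle m (2*s+1,Ca))"
    by (rule allpair) (blast dest: cmb)
qed (simp_all add: good_def valid_cint_def cle_def)

lemma I6: "card (D (2*s+4,Ca) u v n) = card (D (2*s+4,Cab) u v n) + (if weight_u [(2*s+4,Ca)] \<le> u \<and> weight_v [(2*s+4,Ca)] \<le> v \<and> fst (2*s+4,Ca) \<le> n
     then card (D (2*s+2,Ca) (u - weight_u [(2*s+4,Ca)]) (v - weight_v [(2*s+4,Ca)]) (n - fst (2*s+4,Ca))) +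
       (if weight_u [(2*s+2,Cb)] \<le> u - weight_u [(2*s+4,Ca)] \<and> weight_v [(2*s+2,Cb)] \<le> v - weight_v [(2*s+4,Ca)] \<and> fst (2*s+2,Cb) \<le> n - fst (2*s+4,Ca)
        then card (D (2*s+1,Ca) (u - weight_u [(2*s+4,Ca)] - weight_u [(2*s+2,Cb)]) (v - weight_v [(2*s+4,Ca)] - weight_v [(2*s+2,Cb)]) (n - fst (2*s+4,Ca) - fst (2*s+2,Cb))) else 0)
     else 0)"
proof (rule three_term)
  show "\<forall>c. good c \<longrightarrow> crank c \<le> crank (2*s+4,Ca) \<longrightarrow> crank c \<le> crank (2*s+4,Cab) \<or> c = (2*s+4,Ca)"
    by (rule allpair, intro impI, erule pr6, assumption)
  show "\<forall>m. good m \<longrightarrow> (compat (2*s+4,Ca) m \<longleftrightarrow> cle m (2*s+2,Ca) \<or> m = (2*s+2,Cb))"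
    by (rule allpair) (blast dest: cm6)
  show "\<forall>m. good m \<longrightarrow> (compat (2*s+2,Cb) m \<longleftrightarrow> cle m (2*s+1,Ca))"
    by (rule allpair) (blast dest: cmb)
qed (simp_all add: good_def valid_cint_def cle_def)

lemma I7: "card (D (2*s+5,Ca2) u v n) = card (D (2*s+4,Ca) u v n) + (if weight_u [(2*s+5,Ca2)] \<le> u \<and> weight_v [(2*s+5,Ca2)] \<le> v \<and> fst (2*s+5,Ca2) \<le> n
     then card (D (2*s+2,Ca) (u - weight_u [(2*s+5,Ca2)]) (v - weight_v [(2*s+5,Ca2)]) (n - fst (2*s+5,Ca2))) +
       (if weight_u [(2*s+2,Cb)] \<le> u - weight_u [(2*s+5,Ca2)] \<and> weight_v [(2*s+2,Cb)] \<le> v - weight_v [(2*s+5,Ca2)] \<and> fst (2*s+2,Cb) \<le> n - fst (2*s+5,Ca2)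
        then card (D (2*s+1,Ca) (u - weight_u [(2*s+5,Ca2)] - weight_u [(2*s+2,Cb)]) (v - weight_v [(2*s+5,Ca2)] - weight_v [(2*s+2,Cb)]) (n - fst (2*s+5,Ca2) - fst (2*s+2,Cb))) else 0)
     else 0)"
proof (rule three_term)
  show "\<forall>c. good c \<longrightarrow> crank c \<le> crank (2*s+5,Ca2) \<longrightarrow> crank c \<le> crank (2*s+4,Ca) \<or> c = (2*s+5,Ca2)"
    by (rule allpair, intro impI, erule pr7, assumption)
  show "\<forall>m. good m \<longrightarrow> (compat (2*s+5,Ca2) m \<longleftrightarrow> cle m (2*s+2,Ca) \<or> m = (2*s+2,Cb))"
    by (rule allpair) (blast dest: cm7)
  show "\<forall>m. good m \<longrightarrow> (compat (2*s+2,Cb) m \<longleftrightarrow> cle m (2*s+1,Ca))"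
    by (rule allpair) (blast dest: cmb)
qed (simp_all add: good_def valid_cint_def cle_def)

lemma I8: "card (D (2*s+4,Cb) u v n) = card (D (2*s+5,Ca2) u v n) + (if weight_u [(2*s+4,Cb)] \<le> u \<and> weight_v [(2*s+4,Cb)] \<le> v \<and> fst (2*s+4,Cb) \<le> n
     then card (D (2*s+3,Ca) (u - weight_u [(2*s+4,Cb)]) (v - weight_v [(2*s+4,Cb)]) (n - fst (2*s+4,Cb))) else 0)"
proof (rule two_term)
  show "\<forall>c. good c \<longrightarrow> crank c \<le> crank (2*s+4,Cb) \<longrightarrow> crank c \<le> crank (2*s+5,Ca2) \<or> c = (2*s+4,Cb)"
    by (rule allpair, intro impI, erule pr8, assumption)
  show "\<forall>m. good m \<longrightarrow> (compat (2*s+4,Cb) m \<longleftrightarrow> cle m (2*s+3,Ca))"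
    by (rule allpair) (blast dest: cm8)
qed (simp_all add: good_def valid_cint_def)

theorem lemma3p1:
  fixes u v k n :: nat
  assumes "k \<ge> 1" and "n \<ge> 1"
  shows
   "(dcount (2*k+1, Cab) (int u) (int v) (int n) = dcount (2*k, Cb) (int u) (int v) (int n)
        + dcount (2*k-1, Ca) (int u - 1) (int v - 1) (int n - 2*int k - 1)) \<and>
    (dcount (2*k+1, Ca) (int u) (int v) (int n) = dcount (2*k+1, Cab) (int u) (int v) (int n)
        + dcount (2*k, Cab) (int u - 1) (int v) (int n - 2*int k - 1)) \<and>
    (dcount (2*k+1, Cb2) (int u) (int v) (int n) = dcount (2*k+1, Ca) (int u) (int v) (int n)
        + dcount (2*k-1, Ca) (int u) (int v - 2) (int n - 2*int k - 1)) \<and>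
    (dcount (2*k+1, Cb) (int u) (int v) (int n) = dcount (2*k+1, Cb2) (int u) (int v) (int n)
        + dcount (2*k, Ca) (int u) (int v - 1) (int n - 2*int k - 1)) \<and>
    (dcount (2*k+2, Cab) (int u) (int v) (int n) = dcount (2*k+1, Cb) (int u) (int v) (int n)
        + dcount (2*k, Ca) (int u - 1) (int v - 1) (int n - 2*int k - 2)
        + dcount (2*k-1, Ca) (int u - 1) (int v - 2) (int n - 4*int k - 2)) \<and>
    (dcount (2*k+2, Ca) (int u) (int v) (int n) = dcount (2*k+2, Cab) (int u) (int v) (int n)
        + dcount (2*k, Ca) (int u - 1) (int v) (int n - 2*int k - 2)
        + dcount (2*k-1, Ca) (int u - 1) (int v - 1) (int n - 4*int k - 2)) \<and>
    (dcount (2*k+3, Ca2) (int u) (int v) (int n) = dcount (2*k+2, Ca) (int u) (int v) (int n)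
        + dcount (2*k, Ca) (int u - 2) (int v) (int n - 2*int k - 3)
        + dcount (2*k-1, Ca) (int u - 2) (int v - 1) (int n - 4*int k - 3)) \<and>
    (dcount (2*k+2, Cb) (int u) (int v) (int n) = dcount (2*k+3, Ca2) (int u) (int v) (int n)
        + dcount (2*k+1, Ca) (int u) (int v - 1) (int n - 2*int k - 2))"
proof -
  define s where "s = k - 1"
  have k: "k = s + 1" using assms(1) unfolding s_def by simp
  have e: "2*k-1 = 2*s+1" "2*k+1 = 2*s+3" "2*k+2 = 2*s+4" "2*k+3 = 2*s+5"
    unfolding k by simp_all
  have e2: "2*k = 2*s+2" unfolding k by simp
  have x: "v - Suc (Suc 0) = v - 2" "u - Suc (Suc 0) = u - 2" "(6::nat) + 4*s = 4*s+6" "(7::nat) + 4*s = 4*s+7"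
    by simp_all
  have ei: "int n - 2*int k - 1 = int n - int (2*s+3)" "int n - 2*int k - 2 = int n - int (2*s+4)"
    "int n - 4*int k - 2 = int n - int (4*s+6)" "int n - 2*int k - 3 = int n - int (2*s+5)"
    "int n - 4*int k - 3 = int n - int (4*s+7)"
    "int u - 1 = int u - int 1" "int u - 2 = int u - int 2"
    "int v - 1 = int v - int 1" "int v - 2 = int v - int 2"
    unfolding k by simp_all
  have c1: "(dcount (2*k+1, Cab) (int u) (int v) (int n) = dcount (2*k, Cb) (int u) (int v) (int n)
        + dcount (2*k-1, Ca) (int u - 1) (int v - 1) (int n - 2*int k - 1))"
    unfolding e unfolding e2 ei dbase dshift dshiftA dshiftB I1[of s u v n, unfolded W fst_conv]
    by (auto simp: x)
  have c2: "(dcount (2*k+1, Ca) (int u) (int v) (int n) = dcount (2*k+1, Cab) (int u) (int v) (int n)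
        + dcount (2*k, Cab) (int u - 1) (int v) (int n - 2*int k - 1))"
    unfolding e unfolding e2 ei dbase dshift dshiftA dshiftB I2[of s u v n, unfolded W fst_conv]
    by (auto simp: x)
  have c3: "(dcount (2*k+1, Cb2) (int u) (int v) (int n) = dcount (2*k+1, Ca) (int u) (int v) (int n)
        + dcount (2*k-1, Ca) (int u) (int v - 2) (int n - 2*int k - 1))"
    unfolding e unfolding e2 ei dbase dshift dshiftA dshiftB I3[of s u v n, unfolded W fst_conv]
    by (auto simp: x)
  have c4: "(dcount (2*k+1, Cb) (int u) (int v) (int n) = dcount (2*k+1, Cb2) (int u) (int v) (int n)
        + dcount (2*k, Ca) (int u) (int v - 1) (int n - 2*int k - 1))"
    unfolding e unfolding e2 ei dbase dshift dshiftA dshiftB I4[of s u v n, unfolded W fst_conv]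
    by (auto simp: x)
  have c5: "(dcount (2*k+2, Cab) (int u) (int v) (int n) = dcount (2*k+1, Cb) (int u) (int v) (int n)
        + dcount (2*k, Ca) (int u - 1) (int v - 1) (int n - 2*int k - 2)
        + dcount (2*k-1, Ca) (int u - 1) (int v - 2) (int n - 4*int k - 2))"
    unfolding e unfolding e2 ei dbase dshift dshiftA dshiftB I5[of s u v n, unfolded W fst_conv]
    by (auto simp: x)
  have c6: "(dcount (2*k+2, Ca) (int u) (int v) (int n) = dcount (2*k+2, Cab) (int u) (int v) (int n)
        + dcount (2*k, Ca) (int u - 1) (int v) (int n - 2*int k - 2)
        + dcount (2*k-1, Ca) (int u - 1) (int v - 1) (int n - 4*int k - 2))"
    unfolding e unfolding e2 ei dbase dshift dshiftA dshiftB I6[of s u v n, unfolded W fst_conv]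
    by (auto simp: x)
  have c7: "(dcount (2*k+3, Ca2) (int u) (int v) (int n) = dcount (2*k+2, Ca) (int u) (int v) (int n)
        + dcount (2*k, Ca) (int u - 2) (int v) (int n - 2*int k - 3)
        + dcount (2*k-1, Ca) (int u - 2) (int v - 1) (int n - 4*int k - 3))"
    unfolding e unfolding e2 ei dbase dshift dshiftA dshiftB I7[of s u v n, unfolded W fst_conv]
    by (auto simp: x)
  have c8: "(dcount (2*k+2, Cb) (int u) (int v) (int n) = dcount (2*k+3, Ca2) (int u) (int v) (int n)
        + dcount (2*k+1, Ca) (int u) (int v - 1) (int n - 2*int k - 2))"
    unfolding e unfolding e2 ei dbase dshift dshiftA dshiftB I8[of s u v n, unfolded W fst_conv]
    by (auto simp: x)
  show ?thesis using c1 c2 c3 c4 c5 c6 c7 c8 by blast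
qed

end
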